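(* For each prime $p$, there are at most two extreme symmetric triples whose smallest element is $p$, and at most one extreme symmetric sequence of length $4$ whose smallest element is $p$. There is no extreme symmetric sequence of length greater than $4$.
   Context: Two distinct primes $p$ and $q$ form a symmetric pair if $\gcd(p-1, q-1) = |p-q|$. A symmetric sequence is a finite set of primes in which any two distinct primes form a symmetric pair; its length is the number of primes in it, and a symmetric triple is a symmetric sequence of length $3$. A symmetric sequence is called extreme if, writing $p$ for its smallest prime, its largest prime is $2p-1$. *)

theory Defs
  imports "HOL-Computational_Algebra.Primes"
begin

definition symmetric_pair :: "nat \<Rightarrow> nat \<Rightarrow> bool" where
  "symmetric_pair p q \<longleftrightarrow> prime p \<and> prime q \<and> p \<noteq> q \<and>
     int (gcd (p - 1) (q - 1)) = \<bar>int p - int q\<bar>"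

definition symmetric_sequence :: "nat set \<Rightarrow> bool" where
  "symmetric_sequence S \<longleftrightarrow> finite S \<and> (\<forall>p\<in>S. prime p) \<and>
     (\<forall>p\<in>S. \<forall>q\<in>S. p \<noteq> q \<longrightarrow> symmetric_pair p q)"

definition extreme :: "nat set \<Rightarrow> bool" where
  "extreme S \<longleftrightarrow> S \<noteq> {} \<and> Max S = 2 * Min S - 1"

end

theory Submission
  imports Defs
begin

lemma pair_dvd:
  assumes "symmetric_pair p x" "p < x"
  shows "x - p dvd p - 1" "x - p dvd x - 1"
proof -
  have "int (gcd (p - 1) (x - 1)) = int (x - p)" using assms unfolding symmetric_pair_def by auto
  then have "gcd (p - 1) (x - 1) = x - p" by linarith
  then show "x - p dvd p - 1" "x - p dvd x - 1" by (metis gcd_dvd1, metis gcd_dvd2)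
qed

lemma middle:
  assumes "symmetric_pair p x" "symmetric_pair x q" "p < x" "x < q" "q = 2*p - 1"
  shows "2*(x-p) = p - 1 \<or> 3*(x-p) = p-1"
proof -
  have p1: "p \<ge> 1" using assms(1) unfolding symmetric_pair_def using prime_ge_1_nat by blast
  define d where "d = x - p"
  have d0: "d > 0" using assms d_def by auto
  obtain m where m: "p - 1 = d * m" using pair_dvd(1)[OF assms(1,3)] d_def by (auto elim: dvdE)
  have "q - x dvd x - 1" using pair_dvd(1)[OF assms(2,4)] .
  moreover have "q - x = d * (m - 1)" using m assms p1 d_def by (simp add: algebra_simps diff_mult_distrib2)
  moreover have "x - 1 = d * (m + 1)" using m assms p1 d_def by (simp add: algebra_simps)
  ultimately have "d * (m - 1) dvd d * (m + 1)" by simp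
  then have "m - 1 dvd m + 1" using d0 by (simp add: nat_mult_dvd_cancel_disj del: One_nat_def)
  moreover have "m \<ge> 2"
  proof (rule ccontr)
    assume "\<not> m \<ge> 2"
    then have "m = 0 \<or> m = 1" by auto
    then show False using m assms d_def by auto
  qed
  ultimately have "m - 1 dvd (m - 1) + 2" by (metis Suc_1 Suc_diff_le add_2_eq_Suc' diff_Suc_1 le_trans one_le_numeral plus_1_eq_Suc add.commute)
  then have "m - 1 dvd 2" by (metis dvd_add_right_iff dvd_refl)
  then have "m - 1 \<le> 2" by (simp add: dvd_imp_le)
  then have "m = 2 \<or> m = 3" using \<open>m \<ge> 2\<close> by auto
  then show ?thesis using m d_def by auto
qed

lemma ext_struct:
  assumes "symmetric_sequence S" "extreme S"
  shows "Min S \<in> S" "2 * Min S - 1 \<in> S" "Min S \<noteq> 2 * Min S - 1" "prime (Min S)"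
    "S - {Min S, 2 * Min S - 1} \<subseteq> {Min S + (Min S - 1) div 2, Min S + (Min S - 1) div 3}"
    "finite S"
proof -
  define p where "p = Min S"
  have fin: "finite S" and ne: "S \<noteq> {}" using assms unfolding symmetric_sequence_def extreme_def by auto
  show "finite S" by (rule fin)
  have pS: "p \<in> S" using fin ne p_def by simp
  have qS: "2*p - 1 \<in> S" using assms(2) fin ne p_def unfolding extreme_def by (metis Max_in)
  have pr: "prime p" using pS assms(1) unfolding symmetric_sequence_def by auto
  have p2: "p \<ge> 2" using pr prime_ge_2_nat by blast
  show "Min S \<in> S" "2 * Min S - 1 \<in> S" "Min S \<noteq> 2 * Min S - 1" "prime (Min S)"
    using pS qS p2 pr p_def by auto
  show "S - {Min S, 2 * Min S - 1} \<subseteq> {Min S + (Min S - 1) div 2, Min S + (Min S - 1) div 3}"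
  proof
    fix x assume x: "x \<in> S - {Min S, 2 * Min S - 1}"
    have "x \<ge> p" using x fin p_def by auto
    moreover have "x \<le> 2*p - 1" using x fin assms(2) p_def unfolding extreme_def by (metis DiffD1 Max_ge)
    ultimately have lt: "p < x" "x < 2*p - 1" using x p_def by auto
    have sp1: "symmetric_pair p x" and sp2: "symmetric_pair x (2*p-1)"
      using assms(1) pS qS x lt unfolding symmetric_sequence_def by auto
    have "2*(x-p) = p - 1 \<or> 3*(x-p) = p-1" using middle[OF sp1 sp2 lt] by simp
    then show "x \<in> {Min S + (Min S - 1) div 2, Min S + (Min S - 1) div 3}"
      using lt p_def by auto
  qed
qed

lemma card_sub:
  assumes "symmetric_sequence S" "extreme S"
  shows "card S = card (S - {Min S, 2 * Min S - 1}) + 2"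
proof -
  have "card (S - {Min S, 2 * Min S - 1}) = card S - card {Min S, 2 * Min S - 1}"
    using ext_struct[OF assms] by (intro card_Diff_subset) auto
  moreover have "card {Min S, 2 * Min S - 1} = 2" using ext_struct(3)[OF assms] by simp
  moreover have "card S \<ge> 2" using ext_struct[OF assms]
    by (metis \<open>card {Min S, 2 * Min S - 1} = 2\<close> card_mono empty_subsetI insert_subset)
  ultimately show ?thesis by simp
qed

lemma decomp:
  assumes "symmetric_sequence S" "extreme S"
  shows "S = {Min S, 2 * Min S - 1} \<union> (S - {Min S, 2 * Min S - 1})"
  using ext_struct[OF assms] by auto

theorem corollary2:
  shows "(\<forall>p::nat. prime p \<longrightarrow>
            finite {S. symmetric_sequence S \<and> extreme S \<and> card S = 3 \<and> Min S = p} \<and>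
            card {S. symmetric_sequence S \<and> extreme S \<and> card S = 3 \<and> Min S = p} \<le> 2)
       \<and> (\<forall>p::nat. prime p \<longrightarrow>
            finite {S. symmetric_sequence S \<and> extreme S \<and> card S = 4 \<and> Min S = p} \<and>
            card {S. symmetric_sequence S \<and> extreme S \<and> card S = 4 \<and> Min S = p} \<le> 1)
       \<and> (\<forall>S. symmetric_sequence S \<and> extreme S \<longrightarrow> card S \<le> 4)"
proof (intro conjI allI impI)
  fix S assume "symmetric_sequence S \<and> extreme S"
  then have a: "symmetric_sequence S" "extreme S" by auto
  have "card (S - {Min S, 2 * Min S - 1}) \<le> card {Min S + (Min S - 1) div 2, Min S + (Min S - 1) div 3}"
    by (rule card_mono[OF _ ext_struct(5)[OF a]]) simp
  also have "\<dots> \<le> 2" by (simp add: card_insert_le_m1)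
  finally show "card S \<le> 4" using card_sub[OF a] by simp
next
  fix p :: nat assume "prime p"
  define a where "a = p + (p - 1) div 2"
  define b where "b = p + (p - 1) div 3"
  define q where "q = 2 * p - 1"
  have sub: "{S. symmetric_sequence S \<and> extreme S \<and> card S = 3 \<and> Min S = p} \<subseteq> {{p,q,a},{p,q,b}}"
  proof
    fix S assume "S \<in> {S. symmetric_sequence S \<and> extreme S \<and> card S = 3 \<and> Min S = p}"
    then have h: "symmetric_sequence S" "extreme S" "card S = 3" "Min S = p" by auto
    have c1: "card (S - {p, q}) = 1" using card_sub[OF h(1,2)] h q_def by simp
    then obtain x where x: "S - {p,q} = {x}" by (meson card_1_singletonE)
    have "x \<in> {a, b}" using ext_struct(5)[OF h(1,2)] h x a_def b_def q_def by auto
    moreover have "S = {p,q,x}" using decomp[OF h(1,2)] x h q_def by auto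
    ultimately show "S \<in> {{p,q,a},{p,q,b}}" by auto
  qed
  show "finite {S. symmetric_sequence S \<and> extreme S \<and> card S = 3 \<and> Min S = p}"
    using sub finite_subset by blast
  show "card {S. symmetric_sequence S \<and> extreme S \<and> card S = 3 \<and> Min S = p} \<le> 2"
  proof -
    have "card {{p,q,a},{p,q,b}} \<le> 2" by (simp add: card_insert_if)
    moreover have "card {S. symmetric_sequence S \<and> extreme S \<and> card S = 3 \<and> Min S = p} \<le> card {{p,q,a},{p,q,b}}"
      by (rule card_mono[OF _ sub]) simp
    ultimately show ?thesis by linarith
  qed
next
  fix p :: nat assume "prime p"
  define a where "a = p + (p - 1) div 2"
  define b where "b = p + (p - 1) div 3"
  define q where "q = 2 * p - 1"
  have sub: "{S. symmetric_sequence S \<and> extreme S \<and> card S = 4 \<and> Min S = p} \<subseteq> {{p,q,a,b}}"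
  proof
    fix S assume "S \<in> {S. symmetric_sequence S \<and> extreme S \<and> card S = 4 \<and> Min S = p}"
    then have h: "symmetric_sequence S" "extreme S" "card S = 4" "Min S = p" by auto
    have c1: "card (S - {p, q}) = 2" using card_sub[OF h(1,2)] h q_def by simp
    have s: "S - {p,q} \<subseteq> {a,b}" using ext_struct(5)[OF h(1,2)] h a_def b_def q_def by auto
    have "card {a,b} \<le> 2" by (simp add: card_insert_if)
    moreover have "card (S - {p,q}) \<le> card {a,b}" by (rule card_mono[OF _ s]) simp
    ultimately have "card (S - {p,q}) = card {a,b}" using c1 by linarith
    then have "S - {p,q} = {a,b}" by (rule card_subset_eq[rotated, OF s]) simp
    then have "S = {p,q,a,b}" using decomp[OF h(1,2)] h q_def by auto
    then show "S \<in> {{p,q,a,b}}" by auto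
  qed
  show "finite {S. symmetric_sequence S \<and> extreme S \<and> card S = 4 \<and> Min S = p}"
    using sub finite_subset by blast
  show "card {S. symmetric_sequence S \<and> extreme S \<and> card S = 4 \<and> Min S = p} \<le> 1"
    using card_mono[OF _ sub] by simp
qed

end
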